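(* Let $f:\mathbb{R}^n\to\mathbb{R}$ be bounded above on bounded sets, $x\in\mathbb{R}^n$, $\epsilon>0$, and suppose $g_x$ is Lipschitz at $\epsilon$ (i.e. $\operatorname{lip}g_x(\epsilon)<\infty$). Then $\operatorname{calm}\bar f_\epsilon(x)\le\operatorname{lip}g_x(\epsilon)=\sup\{|y|:y\in\partial g_x(\epsilon)\}$.
   Context: $\bar f_\epsilon(x):=\sup\{f(x'):|x'-x|\le\epsilon\}$; $g_x(\epsilon):=\bar f_\epsilon(x)$ for $\epsilon\ge0$. $\operatorname{calm}F(\bar y):=\limsup_{y\to\bar y,\,y\ne\bar y}\frac{|F(y)-F(\bar y)|}{|y-\bar y|}$, $\operatorname{lip}F(\bar y):=\limsup_{y,y'\to\bar y,\,y\ne y'}\frac{|F(y)-F(y')|}{|y-y'|}$. $\partial$ denotes the general (limiting) subdifferential: $v\in\partial g(\bar y)$ if there are $y^\nu\to\bar y$, $v^\nu\to v$ with $g(y^\nu)\to g(\bar y)$ and $g(y)\ge g(y^\nu)+v^\nu(y-y^\nu)+o(|y-y^\nu|)$. *)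

theory Defs
  imports "HOL-Analysis.Analysis"
begin

definition fbar :: "('a::real_normed_vector \<Rightarrow> real) \<Rightarrow> real \<Rightarrow> 'a \<Rightarrow> real" where
  "fbar f e x = (SUP x'\<in>cball x e. f x')"

text \<open>g_x(eps) = fbar_eps(x); only its values for eps >= 0 (indeed near eps > 0) matter.\<close>
definition gfun :: "('a::real_normed_vector \<Rightarrow> real) \<Rightarrow> 'a \<Rightarrow> real \<Rightarrow> real" where
  "gfun f x = (\<lambda>e. fbar f e x)"

definition calm :: "('a::real_normed_vector \<Rightarrow> real) \<Rightarrow> 'a \<Rightarrow> ereal" where
  "calm F yb = Limsup (at yb) (\<lambda>y. ereal (\<bar>F y - F yb\<bar> / norm (y - yb)))"

definition lipm :: "('a::real_normed_vector \<Rightarrow> real) \<Rightarrow> 'a \<Rightarrow> ereal" where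
  "lipm F yb = Limsup (at (yb, yb) within {p. fst p \<noteq> snd p})
      (\<lambda>p. ereal (\<bar>F (fst p) - F (snd p)\<bar> / norm (fst p - snd p)))"

definition regular_subgrad :: "(real \<Rightarrow> real) \<Rightarrow> real \<Rightarrow> real \<Rightarrow> bool" where
  "regular_subgrad g v y0 \<longleftrightarrow>
     (\<forall>e>0. \<forall>\<^sub>F y in at y0. g y \<ge> g y0 + v * (y - y0) - e * \<bar>y - y0\<bar>)"

definition general_subdiff :: "(real \<Rightarrow> real) \<Rightarrow> real \<Rightarrow> real set" where
  "general_subdiff g yb = {v. \<exists>Y V. Y \<longlonglongrightarrow> yb \<and> V \<longlonglongrightarrow> v \<and>
      (\<lambda>k. g (Y k)) \<longlonglongrightarrow> g yb \<and> (\<forall>k. regular_subgrad g (V k) (Y k))}"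

end

theory Submission
  imports Defs
begin

lemma g_mono:
  fixes f :: "'a::euclidean_space \<Rightarrow> real"
  assumes bd: "\<And>S. bounded S \<Longrightarrow> bdd_above (f ` S)" and "0 \<le> a" "a \<le> b"
  shows "gfun f x a \<le> gfun f x b"
  unfolding gfun_def fbar_def
  by (rule cSUP_subset_mono) (use assms in auto)

lemma fbar_bounds:
  fixes f :: "'a::euclidean_space \<Rightarrow> real"
  assumes bd: "\<And>S. bounded S \<Longrightarrow> bdd_above (f ` S)" and "dist y x \<le> e"
  shows "gfun f x (e - dist y x) \<le> fbar f e y \<and> fbar f e y \<le> gfun f x (e + dist y x)"
proof
  show "gfun f x (e - dist y x) \<le> fbar f e y"
    unfolding gfun_def fbar_def
  proof (rule cSUP_subset_mono)
    show "cball x (e - dist y x) \<noteq> {}" using assms(2) by auto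
    show "bdd_above (f ` cball y e)" using bd by simp
    show "cball x (e - dist y x) \<subseteq> cball y e"
      by (auto simp: dist_commute) (metis dist_commute dist_triangle order_trans add_le_cancel_left diff_add_cancel add.commute)
  qed auto
  show "fbar f e y \<le> gfun f x (e + dist y x)"
    unfolding gfun_def fbar_def
  proof (rule cSUP_subset_mono)
    have "0 \<le> e" using assms(2) zero_le_dist[of y x] by linarith
    then show "cball y e \<noteq> {}" by auto
    show "bdd_above (f ` cball x (e + dist y x))" using bd by simp
    show "cball y e \<subseteq> cball x (e + dist y x)"
      by auto (metis add.commute add_mono dist_commute dist_triangle order_trans order_refl)
  qed auto
qed

lemma subgrad_bound:
  fixes G :: "real \<Rightarrow> real"
  assumes sg: "regular_subgrad G w y"
    and lip: "\<forall>s t. \<bar>s-e\<bar> < \<delta> \<longrightarrow> \<bar>t-e\<bar> < \<delta> \<longrightarrow> \<bar>G s - G t\<bar> \<le> L*\<bar>s-t\<bar>"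
    and y: "\<bar>y-e\<bar> < \<delta>"
  shows "\<bar>w\<bar> \<le> L"
proof (rule ccontr)
  assume "\<not> \<bar>w\<bar> \<le> L"
  define \<eta> where "\<eta> = (\<bar>w\<bar> - L)/2"
  have eta: "\<eta> > 0" using \<open>\<not> \<bar>w\<bar> \<le> L\<close> by (simp add: \<eta>_def)
  then have "\<forall>\<^sub>F s in at y. G s \<ge> G y + w * (s - y) - \<eta> * \<bar>s - y\<bar>"
    using sg unfolding regular_subgrad_def by blast
  then obtain d where d: "d > 0" and
    H: "\<And>s. s \<noteq> y \<Longrightarrow> dist s y < d \<Longrightarrow> G s \<ge> G y + w * (s - y) - \<eta> * \<bar>s - y\<bar>"
    unfolding eventually_at by auto
  define h where "h = min d (\<delta> - \<bar>y-e\<bar>) / 2"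
  have h: "h > 0" "h < d" "h < \<delta> - \<bar>y-e\<bar>" using d y by (auto simp: h_def min_def)
  define s where "s = y + (if w \<ge> 0 then h else -h)"
  have sy: "\<bar>s - y\<bar> = h" "w * (s - y) = \<bar>w\<bar> * h" using h by (auto simp: s_def)
  have "G s \<ge> G y + \<bar>w\<bar> * h - \<eta> * h"
    using H[of s] sy h by (auto simp: dist_real_def)
  moreover have "\<bar>G s - G y\<bar> \<le> L * h"
    using lip[rule_format, of s y] sy h y by auto
  ultimately have "(\<bar>w\<bar> - L) * h \<le> \<eta> * h" by (simp add: algebra_simps)
  then have "\<bar>w\<bar> - L \<le> \<eta>" using h(1) by simp
  then show False using eta by (simp add: \<eta>_def)
qed

lemma quad_bound:
  fixes u u0 :: real
  shows "(max 0 u)\<^sup>2 \<le> (max 0 u0)\<^sup>2 + 2 * max 0 u0 * (u - u0) + (u - u0)\<^sup>2"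
proof (cases "u0 \<ge> 0")
  case True
  then show ?thesis by (cases "u \<ge> 0") (auto simp: power2_eq_square algebra_simps)
next
  case False
  then show ?thesis by (cases "u \<ge> 0") (auto simp: power2_eq_square intro: mult_mono)
qed

lemma mvt_subgrad:
  fixes g :: "real \<Rightarrow> real"
  assumes pq: "p < q" and cont: "continuous_on {p..q} g" and gt: "g q - g p > c*(q-p)"
  shows "\<exists>y v. p < y \<and> y < q \<and> v \<ge> c \<and> regular_subgrad g v y"
proof -
  define \<psi> where "\<psi> t = g t - c * t" for t
  have cpsi: "continuous_on {p..q} \<psi>" unfolding \<psi>_def
    by (intro continuous_intros cont)
  have psipq: "\<psi> p < \<psi> q" using gt by (simp add: \<psi>_def algebra_simps)
  obtain d where d: "d > 0" and dH: "\<And>t. t \<in> {p..q} \<Longrightarrow> dist t p < d \<Longrightarrow> dist (\<psi> t) (\<psi> p) < \<psi> q - \<psi> p"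
    using cpsi[unfolded continuous_on_iff, rule_format, of p "\<psi> q - \<psi> p"] psipq pq by auto
  define \<eta> where "\<eta> = min d (q - p) / 2"
  have eta: "\<eta> > 0" "\<eta> < d" "\<eta> < q - p" using d pq by (auto simp: \<eta>_def min_def)
  have "dist (\<psi> (p+\<eta>)) (\<psi> p) < \<psi> q - \<psi> p" using dH[of "p+\<eta>"] eta by (auto simp: dist_real_def)
  then have psieta: "\<psi> (p+\<eta>) < \<psi> q" by (simp add: dist_real_def)
  define K where "K = (\<bar>\<psi> (p+\<eta>) - \<psi> p\<bar> + 1) / \<eta>\<^sup>2"
  have Kpos: "K > 0" using eta by (simp add: K_def)
  have Keta: "K * \<eta>\<^sup>2 > \<psi> (p+\<eta>) - \<psi> p" using eta by (simp add: K_def)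
  define Q where "Q t = (max 0 (p + \<eta> - t))\<^sup>2" for t
  define \<phi> where "\<phi> t = \<psi> t + K * Q t" for t
  have cphi: "continuous_on {p..q} \<phi>" unfolding \<phi>_def Q_def
    by (intro continuous_intros cpsi)
  obtain y0 where y0: "y0 \<in> {p..q}" and ymin: "\<And>t. t \<in> {p..q} \<Longrightarrow> \<phi> y0 \<le> \<phi> t"
    using continuous_attains_inf[OF compact_Icc _ cphi] pq by auto
  have "\<phi> (p+\<eta>) = \<psi> (p+\<eta>)" by (simp add: \<phi>_def Q_def)
  then have phiy0: "\<phi> y0 \<le> \<psi> (p+\<eta>)" using ymin[of "p+\<eta>"] eta by auto
  have "\<phi> q = \<psi> q" using eta by (simp add: \<phi>_def Q_def)
  then have "y0 \<noteq> q" using phiy0 psieta by auto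
  moreover have "\<phi> p = \<psi> p + K * \<eta>\<^sup>2" using eta by (simp add: \<phi>_def Q_def)
  then have "y0 \<noteq> p" using phiy0 Keta by auto
  ultimately have y0i: "p < y0" "y0 < q" using y0 by auto
  define v where "v = c + 2 * K * max 0 (p + \<eta> - y0)"
  have vc: "v \<ge> c" using Kpos by (simp add: v_def)
  have "regular_subgrad g v y0"
    unfolding regular_subgrad_def
  proof (intro allI impI)
    fix e :: real assume e: "e > 0"
    show "\<forall>\<^sub>F y in at y0. g y0 + v * (y - y0) - e * \<bar>y - y0\<bar> \<le> g y"
      unfolding eventually_at
    proof (intro exI[of _ "min (e/K) (min (y0 - p) (q - y0))"] conjI ballI impI)
      show "0 < min (e/K) (min (y0 - p) (q - y0))" using e Kpos y0i by auto
      fix y :: real assume "y \<in> UNIV" and yy: "y \<noteq> y0 \<and> dist y y0 < min (e / K) (min (y0 - p) (q - y0))"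
      then have yin: "y \<in> {p..q}" and ye: "\<bar>y - y0\<bar> < e/K" by (auto simp: dist_real_def)
      have m: "\<phi> y0 \<le> \<phi> y" using ymin[OF yin] .
      have qb: "Q y \<le> Q y0 - 2 * max 0 (p + \<eta> - y0) * (y - y0) + (y - y0)\<^sup>2"
        using quad_bound[of "p + \<eta> - y" "p + \<eta> - y0"] by (simp add: Q_def algebra_simps power2_eq_square)
      have sq: "K * (y - y0)\<^sup>2 \<le> e * \<bar>y - y0\<bar>"
      proof -
        have "K * (y - y0)\<^sup>2 = (K * \<bar>y - y0\<bar>) * \<bar>y - y0\<bar>" by (simp add: power2_eq_square abs_mult_self_eq)
        also have "\<dots> \<le> e * \<bar>y - y0\<bar>"
          using ye Kpos by (intro mult_right_mono) (auto simp: pos_less_divide_eq mult.commute)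
        finally show ?thesis .
      qed
      have "K * Q y \<le> K * Q y0 - 2 * K * max 0 (p + \<eta> - y0) * (y - y0) + K * (y - y0)\<^sup>2"
        using mult_left_mono[OF qb, of K] Kpos by (simp add: algebra_simps)
      then show "g y0 + v * (y - y0) - e * \<bar>y - y0\<bar> \<le> g y"
        using m sq unfolding \<phi>_def \<psi>_def v_def by (simp add: algebra_simps)
    qed
  qed
  then show ?thesis using y0i vc by blast
qed

lemma lip_local:
  fixes G :: "real \<Rightarrow> real"
  assumes "lipm G e < ereal L"
  shows "\<exists>\<delta>>0. \<forall>s t. \<bar>s-e\<bar> < \<delta> \<longrightarrow> \<bar>t-e\<bar> < \<delta> \<longrightarrow> \<bar>G s - G t\<bar> \<le> L*\<bar>s-t\<bar>"
proof -
  have "\<forall>\<^sub>F p in at (e, e) within {p. fst p \<noteq> snd p}.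
      ereal (\<bar>G (fst p) - G (snd p)\<bar> / norm (fst p - snd p)) < ereal L"
    using Limsup_lessD[OF assms[unfolded lipm_def]] by simp
  then obtain d where d: "d > 0" and
    H: "\<And>p. p \<in> {p. fst p \<noteq> snd p} \<Longrightarrow> p \<noteq> (e,e) \<Longrightarrow> dist p (e,e) < d \<Longrightarrow>
       ereal (\<bar>G (fst p) - G (snd p)\<bar> / norm (fst p - snd p)) < ereal L"
    unfolding eventually_at by blast
  show ?thesis
  proof (intro exI[of _ "d/2"] conjI allI impI)
    show "d/2 > 0" using d by simp
    fix s t assume s: "\<bar>s-e\<bar> < d/2" and t: "\<bar>t-e\<bar> < d/2"
    show "\<bar>G s - G t\<bar> \<le> L*\<bar>s-t\<bar>"
    proof (cases "s = t")
      case True then show ?thesis by simp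
    next
      case False
      have "dist (s,t) (e,e) = sqrt ((dist s e)\<^sup>2 + (dist t e)\<^sup>2)" by (rule dist_Pair_Pair)
      also have "\<dots> \<le> dist s e + dist t e"
        by (simp add: sqrt_sum_squares_le_sum)
      also have "\<dots> < d" using s t by (simp add: dist_real_def)
      finally have "dist (s,t) (e,e) < d" .
      with H[of "(s,t)"] False have "\<bar>G s - G t\<bar> / \<bar>s - t\<bar> < L" by auto
      then show ?thesis using False by (simp add: divide_less_eq mult.commute)
    qed
  qed
qed

lemma lip_cont_on:
  fixes G :: "real \<Rightarrow> real"
  assumes lip: "\<forall>s t. \<bar>s-e\<bar> < \<delta> \<longrightarrow> \<bar>t-e\<bar> < \<delta> \<longrightarrow> \<bar>G s - G t\<bar> \<le> L*\<bar>s-t\<bar>"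
  shows "continuous_on (ball e \<delta>) G"
  unfolding continuous_on_iff
proof (intro ballI allI impI)
  fix z and r :: real assume z: "z \<in> ball e \<delta>" and r: "r > 0"
  show "\<exists>d>0. \<forall>x'\<in>ball e \<delta>. dist x' z < d \<longrightarrow> dist (G x') (G z) < r"
  proof (intro exI[of _ "r / (\<bar>L\<bar> + 1)"] conjI ballI impI)
    show "r / (\<bar>L\<bar> + 1) > 0" using r by simp
    fix x' assume x': "x' \<in> ball e \<delta>" and d: "dist x' z < r / (\<bar>L\<bar> + 1)"
    have "\<bar>G x' - G z\<bar> \<le> L * \<bar>x' - z\<bar>"
      using lip z x' by (auto simp: dist_real_def abs_minus_commute)
    also have "\<dots> \<le> \<bar>L\<bar> * \<bar>x' - z\<bar>" by (simp add: mult_right_mono)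
    also have "\<dots> \<le> \<bar>L\<bar> * (r / (\<bar>L\<bar> + 1))"
      using d by (intro mult_left_mono) (auto simp: dist_real_def)
    also have "\<dots> < r" using r by (simp add: field_simps)
    finally show "dist (G x') (G z) < r" by (simp add: dist_real_def)
  qed
qed


theorem corollary3p4:
  fixes f :: "'a::euclidean_space \<Rightarrow> real" and x :: 'a and \<epsilon> :: real
  assumes "\<And>S. bounded S \<Longrightarrow> bdd_above (f ` S)"
    and "\<epsilon> > 0"
    and "lipm (gfun f x) \<epsilon> < \<infinity>"
  shows "calm (fbar f \<epsilon>) x \<le> lipm (gfun f x) \<epsilon>
    \<and> lipm (gfun f x) \<epsilon> = Sup ((\<lambda>y. ereal \<bar>y\<bar>) ` general_subdiff (gfun f x) \<epsilon>)"
proof -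
  note bd = assms(1) and epos = assms(2)
  define G where "G = gfun f x"
  define l where "l = lipm G \<epsilon>"
  define M where "M = Sup ((\<lambda>y. ereal \<bar>y\<bar>) ` general_subdiff G \<epsilon>)"
  have lfin: "l < \<infinity>" using assms(3) by (simp add: l_def G_def)
  have between: "\<exists>L. a < ereal L \<and> ereal L < b" if ab: "a < b" for a b :: ereal
  proof -
    obtain m where "a < m" "m < b" using dense[OF ab] by blast
    then show ?thesis by (cases m) auto
  qed
  have Gfx: "fbar f \<epsilon> x = G \<epsilon>" by (simp add: G_def gfun_def)
  have partA: "calm (fbar f \<epsilon>) x \<le> l"
  proof (rule ccontr)
    assume "\<not> calm (fbar f \<epsilon>) x \<le> l"
    then obtain L where L1: "l < ereal L" and L2: "ereal L < calm (fbar f \<epsilon>) x"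
      using between[of l "calm (fbar f \<epsilon>) x"] by (meson not_le)
    obtain \<delta> where dpos: "\<delta> > 0" and lip: "\<forall>s t. \<bar>s-\<epsilon>\<bar> < \<delta> \<longrightarrow> \<bar>t-\<epsilon>\<bar> < \<delta> \<longrightarrow> \<bar>G s - G t\<bar> \<le> L*\<bar>s-t\<bar>"
      using lip_local[of G \<epsilon> L] L1 by (auto simp: l_def)
    have "calm (fbar f \<epsilon>) x \<le> ereal L"
      unfolding calm_def
    proof (rule Limsup_bounded, unfold eventually_at, intro exI[of _ "min \<delta> \<epsilon>"] conjI ballI impI)
      show "0 < min \<delta> \<epsilon>" using dpos epos by simp
      fix y assume "y \<in> UNIV" and yy: "y \<noteq> x \<and> dist y x < min \<delta> \<epsilon>"
      define t where "t = dist y x"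
      have t: "0 < t" "t < \<delta>" "t < \<epsilon>" using yy by (auto simp: t_def)
      have sw: "G (\<epsilon> - t) \<le> fbar f \<epsilon> y" "fbar f \<epsilon> y \<le> G (\<epsilon> + t)"
        using fbar_bounds[OF bd, of y x \<epsilon>] t by (auto simp: G_def t_def)
      have l1: "\<bar>G (\<epsilon> + t) - G \<epsilon>\<bar> \<le> L * t" using lip[rule_format, of "\<epsilon>+t" \<epsilon>] t dpos by auto
      have l2: "\<bar>G (\<epsilon> - t) - G \<epsilon>\<bar> \<le> L * t" using lip[rule_format, of "\<epsilon>-t" \<epsilon>] t dpos by auto
      have "\<bar>fbar f \<epsilon> y - fbar f \<epsilon> x\<bar> \<le> L * t" using sw l1 l2 Gfx by auto
      then have "\<bar>fbar f \<epsilon> y - fbar f \<epsilon> x\<bar> / norm (y - x) \<le> L"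
        using t by (simp add: t_def dist_norm divide_le_eq mult.commute)
      then show "ereal (\<bar>fbar f \<epsilon> y - fbar f \<epsilon> x\<bar> / norm (y - x)) \<le> ereal L" by simp
    qed
    then show False using L2 by simp
  qed
  have partB1: "M \<le> l"
    unfolding M_def
  proof (rule Sup_least, clarify)
    fix v assume "v \<in> general_subdiff G \<epsilon>"
    then obtain Y V where Y: "Y \<longlonglongrightarrow> \<epsilon>" and V: "V \<longlonglongrightarrow> v" and sg: "\<And>k. regular_subgrad G (V k) (Y k)"
      unfolding general_subdiff_def by blast
    show "ereal \<bar>v\<bar> \<le> l"
    proof (rule ccontr)
      assume "\<not> ereal \<bar>v\<bar> \<le> l"
      then obtain L where L1: "l < ereal L" and L2: "ereal L < ereal \<bar>v\<bar>"
        using between[of l "ereal \<bar>v\<bar>"] by (meson not_le)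
      obtain \<delta> where dpos: "\<delta> > 0" and lip: "\<forall>s t. \<bar>s-\<epsilon>\<bar> < \<delta> \<longrightarrow> \<bar>t-\<epsilon>\<bar> < \<delta> \<longrightarrow> \<bar>G s - G t\<bar> \<le> L*\<bar>s-t\<bar>"
        using lip_local[of G \<epsilon> L] L1 by (auto simp: l_def)
      have "eventually (\<lambda>k. dist (Y k) \<epsilon> < \<delta>) sequentially"
        using Y dpos by (simp add: tendsto_iff)
      then have ev: "eventually (\<lambda>k. \<bar>V k\<bar> \<le> L) sequentially"
        by (rule eventually_mono) (rule subgrad_bound[OF sg lip], simp add: dist_real_def)
      have "\<bar>v\<bar> \<le> L"
        using tendsto_le[OF trivial_limit_sequentially tendsto_const tendsto_rabs[OF V] ev] .
      then show False using L2 by simp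
    qed
  qed
  have partB2: "l \<le> M"
  proof (cases "l \<le> 0")
    case True
    have rs0: "regular_subgrad G 0 \<epsilon>"
        unfolding regular_subgrad_def
      proof (intro allI impI)
        fix e :: real assume e: "e > 0"
        then have "l < ereal e" using True by (meson ereal_less(2) order.strict_trans1 zero_ereal_def)
        then obtain \<delta> where dpos: "\<delta> > 0" and lip: "\<forall>s t. \<bar>s-\<epsilon>\<bar> < \<delta> \<longrightarrow> \<bar>t-\<epsilon>\<bar> < \<delta> \<longrightarrow> \<bar>G s - G t\<bar> \<le> e*\<bar>s-t\<bar>"
          using lip_local[of G \<epsilon> e] by (auto simp: l_def)
        show "\<forall>\<^sub>F y in at \<epsilon>. G \<epsilon> + 0 * (y - \<epsilon>) - e * \<bar>y - \<epsilon>\<bar> \<le> G y"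
          unfolding eventually_at
        proof (intro exI[of _ \<delta>] conjI ballI impI)
          show "0 < \<delta>" by (rule dpos)
          fix y assume "y \<in> UNIV" "y \<noteq> \<epsilon> \<and> dist y \<epsilon> < \<delta>"
          then have "\<bar>G y - G \<epsilon>\<bar> \<le> e * \<bar>y - \<epsilon>\<bar>" using lip dpos by (auto simp: dist_real_def)
          then show "G \<epsilon> + 0 * (y - \<epsilon>) - e * \<bar>y - \<epsilon>\<bar> \<le> G y" by simp
        qed
      qed
    have "0 \<in> general_subdiff G \<epsilon>"
      unfolding general_subdiff_def
      using rs0 by (intro CollectI exI[of _ "\<lambda>k. \<epsilon>"] exI[of _ "\<lambda>k. 0"]) auto
    then have "ereal \<bar>0\<bar> \<le> M" unfolding M_def by (rule SUP_upper)
    then show ?thesis using True by (simp add: zero_ereal_def)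
  next
    case False
    then have lpos: "0 < l" by simp
    then obtain lr where lr: "l = ereal lr" using lfin by (cases l) auto
    show ?thesis
    proof (rule ccontr)
      assume "\<not> l \<le> M"
      then have "max M 0 < l" using lpos by simp
      then obtain c where c1: "max M 0 < ereal c" and c2: "ereal c < l"
        using between by blast
      have cpos: "c > 0" and Mc: "M < ereal c" using c1 by auto
      define L where "L = lr + 1"
      have L1: "l < ereal L" using lr by (simp add: L_def)
      obtain \<delta> where dpos: "\<delta> > 0" and lip: "\<forall>s t. \<bar>s-\<epsilon>\<bar> < \<delta> \<longrightarrow> \<bar>t-\<epsilon>\<bar> < \<delta> \<longrightarrow> \<bar>G s - G t\<bar> \<le> L*\<bar>s-t\<bar>"
        using lip_local[of G \<epsilon> L] L1 by (auto simp: l_def)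
      have cont: "continuous_on (ball \<epsilon> \<delta>) G" by (rule lip_cont_on[OF lip])
      have notev: "\<not> (\<forall>\<^sub>F p in at (\<epsilon>, \<epsilon>) within {p. fst p \<noteq> snd p}.
          ereal (\<bar>G (fst p) - G (snd p)\<bar> / norm (fst p - snd p)) \<le> ereal c)"
      proof
        assume "\<forall>\<^sub>F p in at (\<epsilon>, \<epsilon>) within {p. fst p \<noteq> snd p}.
          ereal (\<bar>G (fst p) - G (snd p)\<bar> / norm (fst p - snd p)) \<le> ereal c"
        then have "l \<le> ereal c" unfolding l_def lipm_def by (rule Limsup_bounded)
        then show False using c2 by simp
      qed
      have step: "\<exists>y v. \<bar>y - \<epsilon>\<bar> < inverse (real (Suc k)) \<and> c \<le> v \<and> v \<le> L \<and> regular_subgrad G v y" for k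
      proof -
        define d where "d = min (inverse (real (Suc k))) (min \<delta> \<epsilon>)"
        have dpos': "d > 0" using dpos epos by (simp add: d_def)
        obtain p where pS: "fst p \<noteq> snd p" and pd: "dist p (\<epsilon>, \<epsilon>) < d"
          and pr: "\<not> ereal (\<bar>G (fst p) - G (snd p)\<bar> / norm (fst p - snd p)) \<le> ereal c"
          using notev dpos' unfolding eventually_at by force
        define s t where "s = fst p" and "t = snd p"
        have sd: "\<bar>s - \<epsilon>\<bar> < d"
          using dist_fst_le[of p "(\<epsilon>, \<epsilon>)"] pd by (simp add: s_def dist_real_def)
        have td: "\<bar>t - \<epsilon>\<bar> < d"
          using dist_snd_le[of p "(\<epsilon>, \<epsilon>)"] pd by (simp add: t_def dist_real_def)
        have st: "s \<noteq> t" using pS by (simp add: s_def t_def)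
        have "c * \<bar>s - t\<bar> < \<bar>G s - G t\<bar>"
          using pr st by (simp add: s_def t_def pos_less_divide_eq not_le)
        define a b where "a = min s t" and "b = max s t"
        have ab: "a < b" using st by (auto simp: a_def b_def)
        have ad: "\<bar>a - \<epsilon>\<bar> < d" and bd': "\<bar>b - \<epsilon>\<bar> < d" using sd td by (auto simp: a_def b_def)
        have apos: "0 \<le> a" using ad by (auto simp: d_def)
        have "G a \<le> G b" unfolding G_def using g_mono[OF bd apos] ab by simp
        moreover have "c * (b - a) < \<bar>G b - G a\<bar>"
          using \<open>c * \<bar>s - t\<bar> < \<bar>G s - G t\<bar>\<close> by (cases "s \<le> t") (auto simp: a_def b_def abs_minus_commute)
        ultimately have gt: "c * (b - a) < G b - G a" by simp
        have sub: "{a..b} \<subseteq> ball \<epsilon> \<delta>"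
          using ad bd' by (auto simp: d_def dist_real_def)
        have "continuous_on {a..b} G" using continuous_on_subset[OF cont sub] .
        from mvt_subgrad[OF ab this gt] obtain y v where
          y: "a < y" "y < b" and v: "c \<le> v" and sg: "regular_subgrad G v y" by blast
        have yd: "\<bar>y - \<epsilon>\<bar> < d" using y ad bd' by auto
        have "\<bar>v\<bar> \<le> L" by (rule subgrad_bound[OF sg lip]) (use yd in \<open>simp add: d_def\<close>)
        then show ?thesis using yd v sg by (intro exI[of _ y] exI[of _ v]) (auto simp: d_def)
      qed
      then obtain Y V where YV: "\<And>k. \<bar>Y k - \<epsilon>\<bar> < inverse (real (Suc k)) \<and> c \<le> V k \<and> V k \<le> L \<and> regular_subgrad G (V k) (Y k)"
        by metis
      have "seq_compact {c..L}" by (rule compact_imp_seq_compact[OF compact_Icc])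
      then obtain v r where vin: "v \<in> {c..L}" and r: "strict_mono r" and Vr: "(V \<circ> r) \<longlonglongrightarrow> v"
        using seq_compactE[of "{c..L}" V] YV by (metis atLeastAtMost_iff)
      have Ylim: "Y \<longlonglongrightarrow> \<epsilon>"
      proof (rule tendsto_sandwich[of "\<lambda>k. \<epsilon> - inverse (real (Suc k))" _ _ "\<lambda>k. \<epsilon> + inverse (real (Suc k))"])
        show "\<forall>\<^sub>F n in sequentially. \<epsilon> - inverse (real (Suc n)) \<le> Y n"
        proof (intro always_eventually allI)
          fix n show "\<epsilon> - inverse (real (Suc n)) \<le> Y n" using YV[of n] by (simp add: abs_less_iff)
        qed
        show "\<forall>\<^sub>F n in sequentially. Y n \<le> \<epsilon> + inverse (real (Suc n))"
        proof (intro always_eventually allI)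
          fix n show "Y n \<le> \<epsilon> + inverse (real (Suc n))" using YV[of n] by (simp add: abs_less_iff)
        qed
        show "(\<lambda>k. \<epsilon> - inverse (real (Suc k))) \<longlonglongrightarrow> \<epsilon>"
          using tendsto_diff[OF tendsto_const LIMSEQ_inverse_real_of_nat, of \<epsilon>] by simp
        show "(\<lambda>k. \<epsilon> + inverse (real (Suc k))) \<longlonglongrightarrow> \<epsilon>"
          using tendsto_add[OF tendsto_const LIMSEQ_inverse_real_of_nat, of \<epsilon>] by simp
      qed
      have Yr: "(Y \<circ> r) \<longlonglongrightarrow> \<epsilon>" using LIMSEQ_subseq_LIMSEQ[OF Ylim r] .
      have "isCont G \<epsilon>"
        using cont dpos continuous_on_eq_continuous_at[OF open_ball, of \<epsilon> \<delta> G] by simp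
      then have Gr: "(\<lambda>k. G ((Y \<circ> r) k)) \<longlonglongrightarrow> G \<epsilon>"
        using isCont_tendsto_compose[OF _ Yr] by blast
      have "v \<in> general_subdiff G \<epsilon>"
        unfolding general_subdiff_def
        using Yr Vr Gr YV by (intro CollectI exI[of _ "Y \<circ> r"] exI[of _ "V \<circ> r"]) auto
      then have "ereal \<bar>v\<bar> \<le> M" unfolding M_def by (rule SUP_upper)
      moreover have "ereal c \<le> ereal \<bar>v\<bar>" using vin by auto
      ultimately show False using Mc
        by (meson ereal_less_eq(3) le_less_trans linorder_not_le)
    qed
  qed
  show ?thesis using partA partB1 partB2 by (simp add: G_def l_def M_def)
qed

end
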